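(* Let $A\subset\mathbb{N}\setminus\{1\}$. If $L(A)$ is lineable, then there exists an integer $k\ge1$ such that $A\cap(A-k)$ is infinite, where $A-k=\{a-k: a\in A\}$.
   Context: $\ell^\infty$ is the space of bounded real sequences with the sup norm. For $x\in\ell^\infty$, $L_x$ denotes the set of accumulation points (subsequential limits) of $x$. For a set $A$ of cardinalities, $L(A)=\{x\in\ell^\infty: |L_x|\in A\}$. A subset $Y$ of a vector space is lineable if $Y\cup\{0\}$ contains an infinite-dimensional linear subspace. *)

theory Defs
  imports Complex_Main
begin

definition linf :: "(nat \<Rightarrow> real) set" where
  "linf = {x. \<exists>B. \<forall>n. \<bar>x n\<bar> \<le> B}"

definition acc_pts :: "(nat \<Rightarrow> real) \<Rightarrow> real set" where
  "acc_pts x = {l. \<exists>r. strict_mono r \<and> (x \<circ> r) \<longlonglongrightarrow> l}"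

definition LA :: "nat set \<Rightarrow> (nat \<Rightarrow> real) set" where
  "LA A = {x \<in> linf. finite (acc_pts x) \<and> card (acc_pts x) \<in> A}"

definition seq_subspace :: "(nat \<Rightarrow> real) set \<Rightarrow> bool" where
  "seq_subspace V \<longleftrightarrow> (\<lambda>n. 0) \<in> V \<and>
     (\<forall>x\<in>V. \<forall>y\<in>V. (\<lambda>n. x n + y n) \<in> V) \<and>
     (\<forall>c. \<forall>x\<in>V. (\<lambda>n. c * x n) \<in> V)"

definition seq_lin_indep :: "(nat \<Rightarrow> real) set \<Rightarrow> bool" where
  "seq_lin_indep S \<longleftrightarrow> (\<forall>T c. finite T \<longrightarrow> T \<subseteq> S \<longrightarrow>
     (\<lambda>n. \<Sum>v\<in>T. c v * v n) = (\<lambda>n. 0) \<longrightarrow> (\<forall>v\<in>T. c v = 0))"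

definition seq_inf_dim :: "(nat \<Rightarrow> real) set \<Rightarrow> bool" where
  "seq_inf_dim V \<longleftrightarrow> (\<exists>S. S \<subseteq> V \<and> infinite S \<and> seq_lin_indep S)"

definition lineable :: "(nat \<Rightarrow> real) set \<Rightarrow> bool" where
  "lineable Y \<longleftrightarrow> (\<exists>V. seq_subspace V \<and> seq_inf_dim V \<and> V \<subseteq> Y \<union> {\<lambda>n. 0})"

end

theory Submission
  imports Defs "HOL-Analysis.Analysis"
begin


definition JJ :: "(nat\<Rightarrow>real) \<Rightarrow> (nat\<Rightarrow>real) \<Rightarrow> (real\<times>real) set" where
  "JJ x y = {(s,z). \<exists>r. strict_mono r \<and> (x\<circ>r) \<longlonglongrightarrow> s \<and> (y\<circ>r) \<longlonglongrightarrow> z}"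

lemma linf_bounded: "x \<in> linf \<Longrightarrow> bounded (range (x \<circ> (r::nat\<Rightarrow>nat)))"
  unfolding linf_def bounded_iff by (auto simp: real_norm_def)

lemma sub_conv:
  fixes r :: "nat \<Rightarrow> nat"
  assumes "x \<in> linf" "strict_mono r"
  shows "\<exists>r2 l. strict_mono r2 \<and> (x\<circ>(r\<circ>r2)) \<longlonglongrightarrow> l"
proof -
  from bounded_imp_convergent_subsequence[OF linf_bounded[OF assms(1), of r]]
  obtain l r2 where "strict_mono r2" "((x\<circ>r)\<circ>r2) \<longlonglongrightarrow> l" by blast
  then show ?thesis by (auto simp: o_assoc)
qed

lemma sub_conv2:
  fixes r :: "nat \<Rightarrow> nat"
  assumes "x \<in> linf" "y \<in> linf" "strict_mono r"
  shows "\<exists>r2 s z. strict_mono r2 \<and> (x\<circ>(r\<circ>r2)) \<longlonglongrightarrow> s \<and> (y\<circ>(r\<circ>r2)) \<longlonglongrightarrow> z"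
proof -
  obtain r2 s where r2: "strict_mono r2" "(x\<circ>(r\<circ>r2)) \<longlonglongrightarrow> s" using sub_conv assms by blast
  have "strict_mono (r\<circ>r2)" using r2 assms strict_mono_o by blast
  then obtain r3 z where r3: "strict_mono r3" "(y\<circ>((r\<circ>r2)\<circ>r3)) \<longlonglongrightarrow> z" using sub_conv assms by blast
  have "(x\<circ>((r\<circ>r2)\<circ>r3)) \<longlonglongrightarrow> s" using LIMSEQ_subseq_LIMSEQ[OF r2(2) r3(1)] by (simp add: o_assoc)
  then show ?thesis using r3 r2 strict_mono_o[OF r2(1) r3(1)] by (metis o_assoc)
qed

lemma acc_combo:
  assumes "x \<in> linf" "y \<in> linf"
  shows "acc_pts (\<lambda>n. a * x n + b * y n) = (\<lambda>p. a * fst p + b * snd p) ` JJ x y"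
proof
  show "acc_pts (\<lambda>n. a * x n + b * y n) \<subseteq> (\<lambda>p. a * fst p + b * snd p) ` JJ x y"
  proof
    fix l assume "l \<in> acc_pts (\<lambda>n. a * x n + b * y n)"
    then obtain r where r: "strict_mono r" "((\<lambda>n. a * x n + b * y n)\<circ>r) \<longlonglongrightarrow> l"
      unfolding acc_pts_def by blast
    obtain r2 s z where r2: "strict_mono r2" "(x\<circ>(r\<circ>r2)) \<longlonglongrightarrow> s" "(y\<circ>(r\<circ>r2)) \<longlonglongrightarrow> z"
      using sub_conv2 assms r(1) by blast
    have "(((\<lambda>n. a * x n + b * y n)\<circ>r)\<circ>r2) \<longlonglongrightarrow> l" using LIMSEQ_subseq_LIMSEQ[OF r(2) r2(1)] .
    moreover have "(((\<lambda>n. a * x n + b * y n)\<circ>r)\<circ>r2) \<longlonglongrightarrow> (a * s + b * z)"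
      using tendsto_add[OF tendsto_mult_left[OF r2(2), of a] tendsto_mult_left[OF r2(3), of b]]
      by (simp add: o_def)
    ultimately have "l = a * s + b * z" using LIMSEQ_unique by blast
    moreover have "(s,z) \<in> JJ x y" unfolding JJ_def using r2 strict_mono_o[OF r(1) r2(1)] by blast
    ultimately show "l \<in> (\<lambda>p. a * fst p + b * snd p) ` JJ x y" by force
  qed
next
  show "(\<lambda>p. a * fst p + b * snd p) ` JJ x y \<subseteq> acc_pts (\<lambda>n. a * x n + b * y n)"
  proof
    fix l assume "l \<in> (\<lambda>p. a * fst p + b * snd p) ` JJ x y"
    then obtain s z r where "l = a * s + b * z" "strict_mono r" "(x\<circ>r) \<longlonglongrightarrow> s" "(y\<circ>r) \<longlonglongrightarrow> z"
      unfolding JJ_def by auto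
    then show "l \<in> acc_pts (\<lambda>n. a * x n + b * y n)" unfolding acc_pts_def
      using tendsto_add[OF tendsto_mult_left[of "x\<circ>r" s sequentially a] tendsto_mult_left[of "y\<circ>r" z sequentially b]]
      by (auto simp: o_def)
  qed
qed

lemma acc_fst: "x \<in> linf \<Longrightarrow> y \<in> linf \<Longrightarrow> acc_pts x = fst ` JJ x y"
  using acc_combo[of x y 1 0] by (simp add: image_image)

lemma acc_snd: "x \<in> linf \<Longrightarrow> y \<in> linf \<Longrightarrow> acc_pts y = snd ` JJ x y"
  using acc_combo[of x y 0 1] by (simp add: image_image)

lemma JJ_sub: "JJ x y \<subseteq> acc_pts x \<times> acc_pts y"
  unfolding JJ_def acc_pts_def by auto

lemma acc_nonempty: "x \<in> linf \<Longrightarrow> acc_pts x \<noteq> {}"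
  using sub_conv[of x id] unfolding acc_pts_def by (auto simp: strict_mono_def)



lemma generic_t:
  fixes J :: "(real\<times>real) set"
  assumes "finite J"
  shows "\<exists>t. inj_on (\<lambda>p. t * fst p + snd p) J"
proof -
  let ?T = "(\<lambda>(p,q). (snd q - snd p)/(fst p - fst q)) ` (J\<times>J)"
  have "finite ?T" using assms by auto
  then obtain t where t: "t \<notin> ?T" using ex_new_if_finite[OF infinite_UNIV_char_0] by blast
  have "inj_on (\<lambda>p. t * fst p + snd p) J"
  proof (rule inj_onI)
    fix p q assume pq: "p \<in> J" "q \<in> J" "t * fst p + snd p = t * fst q + snd q"
    show "p = q"
    proof (cases "fst p = fst q")
      case True then show ?thesis using pq by (simp add: prod_eq_iff)
    next
      case False
      then have "t = (snd q - snd p)/(fst p - fst q)" using pq(3)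
        by (simp add: field_simps)
      then have "t \<in> ?T" using pq by force
      then show ?thesis using t by blast
    qed
  qed
  then show ?thesis by blast
qed

lemma special_t:
  fixes J :: "(real\<times>real) set"
  assumes "finite J" "p0 \<in> J" "q0 \<in> J" "fst p0 \<noteq> fst q0"
  shows "\<exists>t. card ((\<lambda>p. t * fst p + snd p) ` J) < card J \<and>
             card J \<le> card ((\<lambda>p. t * fst p + snd p) ` J) + 2 * card (fst ` J)"
proof -
  define T where "T = {(snd q - snd p)/(fst p - fst q) | p q. p\<in>J \<and> q\<in>J \<and> fst p \<noteq> fst q}"
  have "T \<subseteq> (\<lambda>(p,q). (snd q - snd p)/(fst p - fst q)) ` (J\<times>J)" unfolding T_def by force
  then have fT: "finite T" using assms(1) finite_subset by blast
  have neT: "T \<noteq> {}" unfolding T_def using assms by blast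
  define t where "t = Max T"
  define v where "v = (\<lambda>p. t * fst p + snd p)"
  have mono: "v q \<le> v p" if "p \<in> J" "q \<in> J" "fst q < fst p" for p q
  proof -
    have "(snd q - snd p)/(fst p - fst q) \<in> T" unfolding T_def using that by force
    then have "(snd q - snd p)/(fst p - fst q) \<le> t" unfolding t_def using fT by simp
    then have "snd q - snd p \<le> t * (fst p - fst q)" using that(3) by (simp add: divide_le_eq)
    then show ?thesis unfolding v_def by (simp add: algebra_simps)
  qed
  have vinj_level: "p = q" if "p \<in> J" "q \<in> J" "fst p = fst q" "v p = v q" for p q
    using that unfolding v_def by (simp add: prod_eq_iff)
  have "t \<in> T" unfolding t_def using fT neT by simp
  then obtain p q where pq: "p\<in>J" "q\<in>J" "fst p \<noteq> fst q" "t = (snd q - snd p)/(fst p - fst q)"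
    unfolding T_def by blast
  have "v p = v q" using pq unfolding v_def by (simp add: field_simps)
  moreover have "p \<noteq> q" using pq by auto
  ultimately have "\<not> inj_on v J" using pq by (meson inj_onD)
  then have lt: "card (v ` J) < card J"
    using inj_on_iff_eq_card[OF assms(1), of v] card_image_le[OF assms(1), of v] by linarith
  define C where "C = {p\<in>J. \<exists>q\<in>J. q \<noteq> p \<and> v p = v q}"
  define Mn where "Mn = {p\<in>J. \<forall>q\<in>J. fst q = fst p \<longrightarrow> v p \<le> v q}"
  define Mx where "Mx = {p\<in>J. \<forall>q\<in>J. fst q = fst p \<longrightarrow> v q \<le> v p}"
  have CM: "C \<subseteq> Mn \<union> Mx"
  proof
    fix a assume "a \<in> C"
    then obtain b where ab: "a \<in> J" "b \<in> J" "b \<noteq> a" "v a = v b" unfolding C_def by blast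
    have "fst a \<noteq> fst b" using vinj_level[of a b] ab by auto
    then consider "fst b < fst a" | "fst a < fst b" by linarith
    then show "a \<in> Mn \<union> Mx"
    proof cases
      case 1
      have "a \<in> Mn" unfolding Mn_def
      proof (intro CollectI conjI ballI impI)
        fix q assume "q \<in> J" "fst q = fst a"
        then show "v a \<le> v q" using mono[of q b] ab 1 by simp
      qed (use ab in auto)
      then show ?thesis by blast
    next
      case 2
      have "a \<in> Mx" unfolding Mx_def
      proof (intro CollectI conjI ballI impI)
        fix q assume "q \<in> J" "fst q = fst a"
        then show "v q \<le> v a" using mono[of b q] ab 2 by simp
      qed (use ab in auto)
      then show ?thesis by blast
    qed
  qed
  have "inj_on fst Mn"
  proof (rule inj_onI)
    fix a b assume "a \<in> Mn" "b \<in> Mn" "fst a = fst b"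
    then have "v a \<le> v b" "v b \<le> v a" unfolding Mn_def by auto
    then show "a = b" using vinj_level[of a b] \<open>a \<in> Mn\<close> \<open>b \<in> Mn\<close> \<open>fst a = fst b\<close> unfolding Mn_def by auto
  qed
  then have cMn: "card Mn \<le> card (fst ` J)"
  proof -
    have "Mn \<subseteq> J" unfolding Mn_def by blast
    then have "fst ` Mn \<subseteq> fst ` J" by blast
    then have "card (fst ` Mn) \<le> card (fst ` J)" using assms(1) by (intro card_mono) auto
    then show ?thesis using card_image[OF \<open>inj_on fst Mn\<close>] by simp
  qed
  have "inj_on fst Mx"
  proof (rule inj_onI)
    fix a b assume "a \<in> Mx" "b \<in> Mx" "fst a = fst b"
    then have "v a \<le> v b" "v b \<le> v a" unfolding Mx_def by auto
    then show "a = b" using vinj_level[of a b] \<open>a \<in> Mx\<close> \<open>b \<in> Mx\<close> \<open>fst a = fst b\<close> unfolding Mx_def by auto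
  qed
  then have cMx: "card Mx \<le> card (fst ` J)"
  proof -
    have "Mx \<subseteq> J" unfolding Mx_def by blast
    then have "fst ` Mx \<subseteq> fst ` J" by blast
    then have "card (fst ` Mx) \<le> card (fst ` J)" using assms(1) by (intro card_mono) auto
    then show ?thesis using card_image[OF \<open>inj_on fst Mx\<close>] by simp
  qed
  have fM: "finite Mn" "finite Mx" using assms(1) unfolding Mn_def Mx_def by auto
  have cC: "card C \<le> 2 * card (fst ` J)"
  proof -
    have "card C \<le> card (Mn \<union> Mx)" using CM fM by (simp add: card_mono)
    also have "\<dots> \<le> card Mn + card Mx" by (rule card_Un_le)
    finally show ?thesis using cMn cMx by linarith
  qed
  have CJ: "C \<subseteq> J" unfolding C_def by blast
  have "inj_on v (J - C)"
    by (rule inj_onI) (auto simp: C_def)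
  then have "card (J - C) = card (v ` (J - C))" by (simp add: card_image)
  also have "\<dots> \<le> card (v ` J)" using assms(1) by (intro card_mono) auto
  finally have "card J - card C \<le> card (v ` J)" using card_Diff_subset[OF finite_subset[OF CJ assms(1)] CJ] by simp
  then have "card J \<le> card (v ` J) + 2 * card (fst ` J)" using cC by linarith
  then show ?thesis using lt unfolding v_def by blast
qed



lemma zero_linf: "(\<lambda>n. 0::real) \<in> linf" unfolding linf_def by auto

lemma acc_zero: "acc_pts (\<lambda>n. 0::real) = {0}"
proof -
  have "acc_pts (\<lambda>n. 0::real) \<subseteq> {0}"
    unfolding acc_pts_def by (auto simp: o_def intro: LIMSEQ_unique[OF _ tendsto_const])
  then show ?thesis using acc_nonempty[OF zero_linf] by blast
qed

lemma V_facts: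
  assumes "V \<subseteq> LA A \<union> {\<lambda>n. 0}" "y \<in> V"
  shows "y \<in> linf" "finite (acc_pts y)" "y \<noteq> (\<lambda>n. 0) \<Longrightarrow> card (acc_pts y) \<in> A"
  using assms zero_linf acc_zero unfolding LA_def by auto

lemma V_combo:
  assumes "seq_subspace V" "x \<in> V" "y \<in> V"
  shows "(\<lambda>n. t * x n + 1 * y n) \<in> V"
  using assms unfolding seq_subspace_def by auto

lemma main_from_V:
  fixes A :: "nat set"
  assumes sub: "seq_subspace V" and VA: "V \<subseteq> LA A \<union> {\<lambda>n. 0}" and A1: "1 \<notin> A"
    and unb: "\<And>B. \<exists>y\<in>V. B < card (acc_pts y)"
    and xV: "x \<in> V" and x0: "x \<noteq> (\<lambda>n. 0)"
  shows "\<exists>k::nat. k \<ge> 1 \<and> infinite (A \<inter> {n. n + k \<in> A})"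
proof -
  define m where "m = card (acc_pts x)"
  have xl: "x \<in> linf" and fx: "finite (acc_pts x)" and mA: "m \<in> A"
    using V_facts[OF VA xV] x0 m_def by auto
  have "m \<noteq> 0" using fx acc_nonempty[OF xl] m_def by auto
  moreover have "m \<noteq> 1" using mA A1 by auto
  ultimately have m2: "m \<ge> 2" by linarith
  have key: "\<exists>N g. B < N \<and> 1 \<le> g \<and> g \<le> 2*m \<and> N \<in> A \<and> N - g \<in> A" for B
  proof -
    obtain y where yV: "y \<in> V" and cy: "B + 2*m + 1 < card (acc_pts y)" using unb by blast
    have yl: "y \<in> linf" and fy: "finite (acc_pts y)" using V_facts[OF VA yV] by auto
    define J where "J = JJ x y"
    have fJ: "finite J" unfolding J_def using finite_subset[OF JJ_sub finite_cartesian_product[OF fx fy]] by simp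
    have fstJ: "fst ` J = acc_pts x" unfolding J_def using acc_fst[OF xl yl] by simp
    have sndJ: "snd ` J = acc_pts y" unfolding J_def using acc_snd[OF xl yl] by simp
    have cJ: "card (acc_pts y) \<le> card J" using sndJ card_image_le[OF fJ, of snd] by simp
    have accc: "acc_pts (\<lambda>n. t * x n + 1 * y n) = (\<lambda>p. t * fst p + snd p) ` J" for t
      using acc_combo[OF xl yl, of t 1] unfolding J_def by simp
    have inA: "card (acc_pts (\<lambda>n. t * x n + 1 * y n)) \<in> A"
      if "1 < card (acc_pts (\<lambda>n. t * x n + 1 * y n))" for t
    proof -
      have "(\<lambda>n. t * x n + 1 * y n) \<noteq> (\<lambda>n. 0)"
      proof
        assume "(\<lambda>n. t * x n + 1 * y n) = (\<lambda>n. 0)"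
        then have "card (acc_pts (\<lambda>n. t * x n + 1 * y n)) = 1" using acc_zero by simp
        then show False using that by simp
      qed
      then show ?thesis using V_facts(3)[OF VA V_combo[OF sub xV yV]] by blast
    qed
    obtain t1 where t1: "inj_on (\<lambda>p. t1 * fst p + snd p) J" using generic_t[OF fJ] by blast
    have N: "card (acc_pts (\<lambda>n. t1 * x n + 1 * y n)) = card J"
      using accc[of t1] card_image[OF t1] by simp
    have "card (fst ` J) \<ge> 2" using fstJ m2 m_def by simp
    then obtain a b where ab: "a \<in> fst ` J" "b \<in> fst ` J" "a \<noteq> b"
    proof -
      have "\<not> card (fst ` J) \<le> Suc 0" using \<open>card (fst ` J) \<ge> 2\<close> by linarith
      then show ?thesis using card_le_Suc0_iff_eq[OF finite_imageI[OF fJ]] that by blast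
    qed
    then obtain p0 q0 where pq: "p0 \<in> J" "q0 \<in> J" "fst p0 \<noteq> fst q0" by auto
    obtain t2 where t2: "card ((\<lambda>p. t2 * fst p + snd p) ` J) < card J"
      "card J \<le> card ((\<lambda>p. t2 * fst p + snd p) ` J) + 2 * card (fst ` J)"
      using special_t[OF fJ pq] by blast
    define N where "N = card J"
    define g where "g = card J - card ((\<lambda>p. t2 * fst p + snd p) ` J)"
    have "N \<in> A" using inA[of t1] N cJ cy N_def by simp
    moreover have "N - g = card (acc_pts (\<lambda>n. t2 * x n + 1 * y n))"
      using accc[of t2] t2 N_def g_def by simp
    moreover have "N - g \<in> A" using inA[of t2] calculation(2) t2 fstJ m_def cJ cy N_def g_def by simp
    moreover have "B < N" using cJ cy N_def by simp
    moreover have "1 \<le> g" "g \<le> 2*m" using t2 g_def fstJ m_def by auto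
    ultimately show ?thesis by blast
  qed
  show ?thesis
  proof (rule ccontr)
    assume "\<not> ?thesis"
    then have fin: "finite (A \<inter> {n. n + k \<in> A})" if "k \<ge> 1" for k using that by blast
    define U where "U = (\<Union>k\<in>{1..2*m}. A \<inter> {n. n + k \<in> A})"
    have "finite U" unfolding U_def by (rule finite_UN_I) (auto intro: fin)
    then obtain B where B: "\<forall>n\<in>U. n \<le> B" using finite_nat_set_iff_bounded_le by blast
    obtain N g where Ng: "B + 2*m < N" "1 \<le> g" "g \<le> 2*m" "N \<in> A" "N - g \<in> A" using key by blast
    have "N - g + g = N" using Ng by linarith
    then have "N - g \<in> U" unfolding U_def using Ng by (intro UN_I[of g]) auto
    then have "N - g \<le> B" using B by blast
    then show False using Ng by linarith
  qed
qed



lemma lin_dep: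
  fixes G :: "'a \<Rightarrow> 'b \<Rightarrow> real"
  assumes "finite K"
  shows "finite T \<Longrightarrow> card K < card T \<Longrightarrow>
     \<exists>c. (\<exists>v\<in>T. c v \<noteq> 0) \<and> (\<forall>s\<in>K. (\<Sum>v\<in>T. c v * G v s) = 0)"
  using assms
proof (induction K arbitrary: T G rule: finite_induct)
  case empty
  then obtain v0 where "v0 \<in> T" by fastforce
  then show ?case by (intro exI[of _ "\<lambda>v. if v = v0 then 1 else 0"]) auto
next
  case (insert s0 K)
  have cK: "card K < card T" using insert by simp
  show ?case
  proof (cases "\<forall>v\<in>T. G v s0 = 0")
    case True
    obtain c where c: "\<exists>v\<in>T. c v \<noteq> 0" "\<forall>s\<in>K. (\<Sum>v\<in>T. c v * G v s) = 0"
      using insert.IH[OF insert.prems(1) cK] by blast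
    then show ?thesis using True by (intro exI[of _ c]) auto
  next
    case False
    then obtain v0 where v0: "v0 \<in> T" "G v0 s0 \<noteq> 0" by blast
    define T' where "T' = T - {v0}"
    define G' where "G' = (\<lambda>v s. G v s - G v s0 / G v0 s0 * G v0 s)"
    have fT': "finite T'" using insert.prems T'_def by simp
    have "card (insert s0 K) = Suc (card K)" using insert.hyps by simp
    then have cT': "card K < card T'" using v0 insert.prems T'_def by auto
    obtain c' where c': "\<exists>v\<in>T'. c' v \<noteq> 0" "\<forall>s\<in>K. (\<Sum>v\<in>T'. c' v * G' v s) = 0"
      using insert.IH[OF fT' cT', of G'] by blast
    define a where "a = - (\<Sum>u\<in>T'. c' u * G u s0) / G v0 s0"
    define c where "c = (\<lambda>v. if v = v0 then a else c' v)"
    have split: "(\<Sum>v\<in>T. c v * G v s) = a * G v0 s + (\<Sum>v\<in>T'. c' v * G v s)" for s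
    proof -
      have "(\<Sum>v\<in>T. c v * G v s) = c v0 * G v0 s + (\<Sum>v\<in>T'. c v * G v s)"
        unfolding T'_def using sum.remove[OF insert.prems(1) v0(1)] by blast
      moreover have "(\<Sum>v\<in>T'. c v * G v s) = (\<Sum>v\<in>T'. c' v * G v s)"
        unfolding T'_def c_def by (intro sum.cong) auto
      ultimately show ?thesis unfolding c_def by simp
    qed
    have "\<exists>v\<in>T. c v \<noteq> 0" using c' unfolding c_def T'_def by auto
    moreover have "\<forall>s\<in>insert s0 K. (\<Sum>v\<in>T. c v * G v s) = 0"
    proof
      fix s assume s: "s \<in> insert s0 K"
      show "(\<Sum>v\<in>T. c v * G v s) = 0"
      proof (cases "s = s0")
        case True
        then show ?thesis using split[of s0] v0(2) unfolding a_def by simp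
      next
        case False
        then have sK: "s \<in> K" using s by simp
        have "(\<Sum>v\<in>T'. c' v * G' v s) = (\<Sum>v\<in>T'. c' v * G v s) - (\<Sum>v\<in>T'. c' v * G v s0) / G v0 s0 * G v0 s"
          unfolding G'_def by (simp add: right_diff_distrib sum_subtractf sum_distrib_right sum_divide_distrib mult.assoc)
        then have "(\<Sum>v\<in>T'. c' v * G v s) - (\<Sum>v\<in>T'. c' v * G v s0) / G v0 s0 * G v0 s = 0"
          using c'(2) sK by simp
        then show ?thesis using split[of s] unfolding a_def by (simp add: algebra_simps)
      qed
    qed
    ultimately show ?thesis by blast
  qed
qed



lemma V_lin:
  assumes "seq_subspace V" "y1 \<in> V" "y2 \<in> V"
  shows "(\<lambda>n. c1 * y1 n + c2 * y2 n) \<in> V"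
proof -
  have "(\<lambda>n. c1 * y1 n) \<in> V" "(\<lambda>n. c2 * y2 n) \<in> V" using assms unfolding seq_subspace_def by auto
  then show ?thesis using assms(1) unfolding seq_subspace_def by auto
qed

lemma unbounded:
  fixes A :: "nat set"
  assumes sub: "seq_subspace V" and VA: "V \<subseteq> LA A \<union> {\<lambda>n. 0}" and A1: "1 \<notin> A"
    and SV: "S \<subseteq> V" and infS: "infinite S" and ind: "seq_lin_indep S"
  shows "\<exists>y\<in>V. B < card (acc_pts y)"
proof (rule ccontr)
  assume "\<not> ?thesis"
  then have bnd: "\<forall>y\<in>V. card (acc_pts y) \<le> B" by auto
  have zV: "(\<lambda>n. 0) \<in> V" using sub unfolding seq_subspace_def by auto
  define M where "M = Max ((\<lambda>y. card (acc_pts y)) ` V)"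
  have finM: "finite ((\<lambda>y. card (acc_pts y)) ` V)"
  proof -
    have "(\<lambda>y. card (acc_pts y)) ` V \<subseteq> {..B}" using bnd by auto
    then show ?thesis using finite_subset by blast
  qed
  have neM: "(\<lambda>y. card (acc_pts y)) ` V \<noteq> {}" using zV by auto
  obtain w where wV: "w \<in> V" and wM: "card (acc_pts w) = M"
    using Max_in[OF finM neM] unfolding M_def by auto
  have leM: "card (acc_pts y) \<le> M" if "y \<in> V" for y
    unfolding M_def using Max_ge[OF finM] that by auto
  have wl: "w \<in> linf" and fw: "finite (acc_pts w)" using V_facts[OF VA wV] by auto
  have graph: "inj_on fst (JJ w y)" if yV: "y \<in> V" for y
  proof -
    have yl: "y \<in> linf" and fy: "finite (acc_pts y)" using V_facts[OF VA yV] by auto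
    define J where "J = JJ w y"
    have fJ: "finite J" unfolding J_def using finite_subset[OF JJ_sub finite_cartesian_product[OF fw fy]] by simp
    obtain t where t: "inj_on (\<lambda>p. t * fst p + snd p) J" using generic_t[OF fJ] by blast
    have "acc_pts (\<lambda>n. t * w n + 1 * y n) = (\<lambda>p. t * fst p + snd p) ` J"
      using acc_combo[OF wl yl, of t 1] unfolding J_def by simp
    then have "card J = card (acc_pts (\<lambda>n. t * w n + 1 * y n))" using card_image[OF t] by simp
    also have "\<dots> \<le> M" using leM V_combo[OF sub wV yV] by blast
    finally have "card J \<le> card (fst ` J)" using acc_fst[OF wl yl] wM unfolding J_def by simp
    then have "card (fst ` J) = card J" using card_image_le[OF fJ, of fst] by linarith
    then show ?thesis using inj_on_iff_eq_card[OF fJ] unfolding J_def by blast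
  qed
  define F where "F = (\<lambda>y s. THE z. (s,z) \<in> JJ w y)"
  have Fprop: "(s, F y s) \<in> JJ w y \<and> (\<forall>z. (s,z) \<in> JJ w y \<longrightarrow> z = F y s)"
    if yV: "y \<in> V" and s: "s \<in> acc_pts w" for y s
  proof -
    have yl: "y \<in> linf" using V_facts[OF VA yV] by auto
    have "s \<in> fst ` JJ w y" using acc_fst[OF wl yl] s by simp
    then obtain z where z: "(s,z) \<in> JJ w y" by force
    have uniq: "z' = z" if "(s,z') \<in> JJ w y" for z'
      using inj_onD[OF graph[OF yV] _ that z] by simp
    have "F y s = z" unfolding F_def using the_equality[of "\<lambda>z. (s,z) \<in> JJ w y", OF z uniq] .
    then show ?thesis using z uniq by blast
  qed
  have lin2: "F (\<lambda>n. c1 * y1 n + c2 * y2 n) s = c1 * F y1 s + c2 * F y2 s"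
    if y1V: "y1 \<in> V" and y2V: "y2 \<in> V" and s: "s \<in> acc_pts w" for y1 y2 c1 c2 s
  proof -
    define u where "u = (\<lambda>n. c1 * y1 n + c2 * y2 n)"
    have uV: "u \<in> V" unfolding u_def using V_lin[OF sub y1V y2V] .
    have l1: "y1 \<in> linf" and l2: "y2 \<in> linf" using V_facts[OF VA y1V] V_facts[OF VA y2V] by auto
    have "(s, F u s) \<in> JJ w u" using Fprop[OF uV s] by blast
    then obtain r where r: "strict_mono r" "(w\<circ>r) \<longlonglongrightarrow> s" "(u\<circ>r) \<longlonglongrightarrow> F u s"
      unfolding JJ_def by blast
    obtain r2 a b where r2: "strict_mono r2" "(y1\<circ>(r\<circ>r2)) \<longlonglongrightarrow> a" "(y2\<circ>(r\<circ>r2)) \<longlonglongrightarrow> b"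
      using sub_conv2[OF l1 l2 r(1)] by blast
    have rr: "strict_mono (r\<circ>r2)" using strict_mono_o[OF r(1) r2(1)] .
    have ws: "(w\<circ>(r\<circ>r2)) \<longlonglongrightarrow> s" using LIMSEQ_subseq_LIMSEQ[OF r(2) r2(1)] by (simp add: o_assoc)
    have "(s,a) \<in> JJ w y1" unfolding JJ_def using rr ws r2 by blast
    then have a: "a = F y1 s" using Fprop[OF y1V s] by blast
    have "(s,b) \<in> JJ w y2" unfolding JJ_def using rr ws r2 by blast
    then have b: "b = F y2 s" using Fprop[OF y2V s] by blast
    have "(u\<circ>(r\<circ>r2)) \<longlonglongrightarrow> F u s" using LIMSEQ_subseq_LIMSEQ[OF r(3) r2(1)] by (simp add: o_assoc)
    moreover have "(u\<circ>(r\<circ>r2)) \<longlonglongrightarrow> c1 * a + c2 * b"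
      using tendsto_add[OF tendsto_mult_left[OF r2(2), of c1] tendsto_mult_left[OF r2(3), of c2]]
      unfolding u_def by (simp add: o_def)
    ultimately have "F u s = c1 * a + c2 * b" using LIMSEQ_unique by blast
    then show ?thesis unfolding u_def a b .
  qed
  have F0: "F (\<lambda>n. 0) s = 0" if s: "s \<in> acc_pts w" for s
  proof -
    have "(s, F (\<lambda>n. 0) s) \<in> JJ w (\<lambda>n. 0)" using Fprop[OF zV s] by blast
    then obtain r where "((\<lambda>n. 0::real)\<circ>r) \<longlonglongrightarrow> F (\<lambda>n. 0) s"
      unfolding JJ_def by auto
    then show ?thesis using LIMSEQ_unique[OF _ tendsto_const] by (simp add: o_def)
  qed
  have sumlin: "(\<lambda>n. \<Sum>v\<in>T. c v * v n) \<in> V \<and> (\<forall>s\<in>acc_pts w. F (\<lambda>n. \<Sum>v\<in>T. c v * v n) s = (\<Sum>v\<in>T. c v * F v s))"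
    if "finite T" "T \<subseteq> V" for T c
    using that
  proof (induction T rule: finite_induct)
    case empty
    then show ?case using zV F0 by simp
  next
    case (insert v T)
    have vV: "v \<in> V" and TV: "T \<subseteq> V" using insert.prems by auto
    have IH: "(\<lambda>n. \<Sum>v\<in>T. c v * v n) \<in> V" "\<forall>s\<in>acc_pts w. F (\<lambda>n. \<Sum>v\<in>T. c v * v n) s = (\<Sum>v\<in>T. c v * F v s)"
      using insert.IH[OF TV] by auto
    have eq: "(\<lambda>n. \<Sum>u\<in>insert v T. c u * u n) = (\<lambda>n. c v * v n + 1 * (\<Sum>u\<in>T. c u * u n))"
      using insert.hyps by simp
    show ?case unfolding eq
    proof
      show "(\<lambda>n. c v * v n + 1 * (\<Sum>u\<in>T. c u * u n)) \<in> V"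
        using V_lin[OF sub vV IH(1), of "c v" 1] by simp
      show "\<forall>s\<in>acc_pts w. F (\<lambda>n. c v * v n + 1 * (\<Sum>u\<in>T. c u * u n)) s = (\<Sum>u\<in>insert v T. c u * F u s)"
        using lin2[OF vV IH(1), of _ "c v" 1] IH(2) insert.hyps by simp
    qed
  qed
  have kernel: "y = (\<lambda>n. 0)" if yV: "y \<in> V" and F0y: "\<forall>s\<in>acc_pts w. F y s = 0" for y
  proof (rule ccontr)
    assume y0: "y \<noteq> (\<lambda>n. 0)"
    have yl: "y \<in> linf" using V_facts[OF VA yV] by auto
    have "acc_pts y \<subseteq> {0}"
    proof
      fix l assume "l \<in> acc_pts y"
      then obtain p where p: "p \<in> JJ w y" "l = snd p" using acc_snd[OF wl yl] by auto
      have "fst p \<in> acc_pts w" using acc_fst[OF wl yl] p by auto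
      have "(fst p, snd p) \<in> JJ w y" using p(1) by simp
      then have "l = F y (fst p)" using Fprop[OF yV \<open>fst p \<in> acc_pts w\<close>] p(2) by blast
      then show "l \<in> {0}" using F0y \<open>fst p \<in> acc_pts w\<close> by simp
    qed
    then have "acc_pts y = {0}" using acc_nonempty[OF yl] by blast
    then show False using V_facts(3)[OF VA yV y0] A1 by simp
  qed
  obtain T where T: "T \<subseteq> S" "finite T" "card T = Suc M" using infinite_arbitrarily_large[OF infS] by blast
  have "card (acc_pts w) < card T" using wM T by simp
  then obtain c where c: "\<exists>v\<in>T. c v \<noteq> 0" "\<forall>s\<in>acc_pts w. (\<Sum>v\<in>T. c v * F v s) = 0"
    using lin_dep[OF fw T(2), of F] by blast
  have TV: "T \<subseteq> V" using T SV by auto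
  have sl: "(\<lambda>n. \<Sum>v\<in>T. c v * v n) \<in> V"
    "\<forall>s\<in>acc_pts w. F (\<lambda>n. \<Sum>v\<in>T. c v * v n) s = (\<Sum>v\<in>T. c v * F v s)"
    using sumlin[OF T(2) TV, of c] by auto
  have "(\<lambda>n. \<Sum>v\<in>T. c v * v n) = (\<lambda>n. 0)"
    using kernel[OF sl(1)] sl(2) c(2) by simp
  then have "\<forall>v\<in>T. c v = 0" using ind T unfolding seq_lin_indep_def by blast
  then show False using c(1) by blast
qed


theorem theorem2p3:
  fixes A :: "nat set"
  assumes "1 \<notin> A"
    and "lineable (LA A)"
  shows "\<exists>k::nat. k \<ge> 1 \<and> infinite (A \<inter> {n. n + k \<in> A})"
proof -
  obtain V where sub: "seq_subspace V" and dim: "seq_inf_dim V" and VA: "V \<subseteq> LA A \<union> {\<lambda>n. 0}"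
    using assms(2) unfolding lineable_def by blast
  obtain S where SV: "S \<subseteq> V" and infS: "infinite S" and ind: "seq_lin_indep S"
    using dim unfolding seq_inf_dim_def by blast
  obtain x where xS: "x \<in> S" using infS by (metis ex_in_conv finite.emptyI)
  have x0: "x \<noteq> (\<lambda>n. 0)"
  proof
    assume x0: "x = (\<lambda>n. 0)"
    have "(\<lambda>n. \<Sum>v\<in>{x}. (\<lambda>_. 1::real) v * v n) = (\<lambda>n. 0)" using x0 by simp
    moreover have "{x} \<subseteq> S" using xS by simp
    ultimately have "\<forall>v\<in>{x}. (\<lambda>_. 1::real) v = 0"
      using ind[unfolded seq_lin_indep_def, rule_format, of "{x}" "\<lambda>_. 1"] by simp
    then show False by simp
  qed
  show ?thesis
    using main_from_V[OF sub VA assms(1) unbounded[OF sub VA assms(1) SV infS ind] _ x0] xS SV by blast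
qed

end
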